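(* Let $p_0,p_1,p_2,p_3\ge 0$ with $p_0+p_1+p_2+p_3=1$, and let $\Theta:\mathcal{L}(\mathbb{C}^2)\to\mathcal{L}(\mathbb{C}^2)$ be the mixed Pauli channel $\Theta(\rho)=p_0\,\rho+p_1\,\sigma_1\rho\sigma_1+p_2\,\sigma_2\rho\sigma_2+p_3\,\sigma_3\rho\sigma_3$, where $\sigma_1=\begin{pmatrix}0&1\\1&0\end{pmatrix}$, $\sigma_2=\begin{pmatrix}0&-i\\i&0\end{pmatrix}$, $\sigma_3=\begin{pmatrix}1&0\\0&-1\end{pmatrix}$. If at least three of $p_0,p_1,p_2,p_3$ are nonzero, then every channel complementary to $\Theta$ has positive coherent information.
   Context: A quantum channel $\Phi:\mathcal{L}(\mathcal{A})\to\mathcal{L}(\mathcal{B})$ (completely positive, trace-preserving, finite-dimensional spaces) can be written as $\Phi(\rho)=\operatorname{Tr}_{\mathcal{E}}(A\rho A^{\ast})$ for an isometry $A\in\mathcal{L}(\mathcal{A},\mathcal{B}\otimes\mathcal{E})$. For any such representation, the channel $\Psi:\mathcal{L}(\mathcal{A})\to\mathcal{L}(\mathcal{E})$ given by $\Psi(\rho)=\operatorname{Tr}_{\mathcal{B}}(A\rho A^{\ast})$ is called a complementary channel to $\Phi$. The coherent information of a state $\rho$ through $\Psi$ is $\operatorname{I}_{\mathrm{C}}(\rho;\Psi)=\operatorname{H}(\Psi(\rho))-\operatorname{H}(\Phi(\rho))$, with $\operatorname{H}(\sigma)=-\operatorname{Tr}(\sigma\log\sigma)$ the von Neumann entropy (independent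 of the choice of complementary channel), and the coherent information of $\Psi$ is $\operatorname{I}_{\mathrm{C}}(\Psi)=\max_{\rho}\operatorname{I}_{\mathrm{C}}(\rho;\Psi)$ over input density operators $\rho$. "Positive coherent information" means $\operatorname{I}_{\mathrm{C}}(\Psi)>0$. *)

theory Defs
  imports Complex_Main "Jordan_Normal_Form.Jordan_Normal_Form"
begin

definition sigma1 :: "complex mat" where
  "sigma1 = mat_of_rows_list 2 [[0, 1], [1, 0]]"
definition sigma2 :: "complex mat" where
  "sigma2 = mat_of_rows_list 2 [[0, - \<i>], [\<i>, 0]]"
definition sigma3 :: "complex mat" where
  "sigma3 = mat_of_rows_list 2 [[1, 0], [0, -1]]"

definition adj :: "complex mat \<Rightarrow> complex mat" where
  "adj A = mat (dim_col A) (dim_row A) (\<lambda>(i,j). cnj (A $$ (j,i)))"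

definition tr :: "complex mat \<Rightarrow> complex" where
  "tr A = (\<Sum>i<dim_row A. A $$ (i,i))"

definition density :: "nat \<Rightarrow> complex mat \<Rightarrow> bool" where
  "density n \<rho> \<longleftrightarrow> \<rho> \<in> carrier_mat n n \<and> adj \<rho> = \<rho> \<and>
     (\<forall>v :: nat \<Rightarrow> complex. 0 \<le> Re (\<Sum>i<n. \<Sum>j<n. cnj (v i) * \<rho> $$ (i,j) * v j)) \<and>
     tr \<rho> = 1"

definition pauli_channel :: "real \<Rightarrow> real \<Rightarrow> real \<Rightarrow> real \<Rightarrow> complex mat \<Rightarrow> complex mat" where
  "pauli_channel p0 p1 p2 p3 \<rho> =
     complex_of_real p0 \<cdot>\<^sub>m \<rho> + complex_of_real p1 \<cdot>\<^sub>m (sigma1 * \<rho> * sigma1)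
     + complex_of_real p2 \<cdot>\<^sub>m (sigma2 * \<rho> * sigma2) + complex_of_real p3 \<cdot>\<^sub>m (sigma3 * \<rho> * sigma3)"

(* C^b \<otimes> C^e is identified with C^(b*e) via (i,k) \<mapsto> i*e + k *)
definition ptrace_E :: "nat \<Rightarrow> nat \<Rightarrow> complex mat \<Rightarrow> complex mat" where
  "ptrace_E b e M = mat b b (\<lambda>(i,j). \<Sum>k<e. M $$ (i*e+k, j*e+k))"
definition ptrace_B :: "nat \<Rightarrow> nat \<Rightarrow> complex mat \<Rightarrow> complex mat" where
  "ptrace_B b e M = mat e e (\<lambda>(k,l). \<Sum>i<b. M $$ (i*e+k, i*e+l))"

definition complementary :: "nat \<Rightarrow> nat \<Rightarrow> nat \<Rightarrow> (complex mat \<Rightarrow> complex mat)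
    \<Rightarrow> (complex mat \<Rightarrow> complex mat) \<Rightarrow> bool" where
  "complementary a b e \<Phi> \<Psi> \<longleftrightarrow> (\<exists>A. A \<in> carrier_mat (b*e) a \<and> adj A * A = 1\<^sub>m a \<and>
     (\<forall>\<rho> \<in> carrier_mat a a. \<Phi> \<rho> = ptrace_E b e (A * \<rho> * adj A) \<and>
                              \<Psi> \<rho> = ptrace_B b e (A * \<rho> * adj A)))"

(* von Neumann entropy -Tr(s log s) = - sum of lambda ln lambda over eigenvalues
   (with multiplicity, 0 ln 0 = 0) *)
definition entropy :: "complex mat \<Rightarrow> real" where
  "entropy \<sigma> = - (\<Sum>x\<in>{x. poly (char_poly \<sigma>) x = 0}.
       real (order x (char_poly \<sigma>)) * (if Re x \<le> 0 then 0 else Re x * ln (Re x)))"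

definition coh_info_state :: "(complex mat \<Rightarrow> complex mat) \<Rightarrow> (complex mat \<Rightarrow> complex mat)
    \<Rightarrow> complex mat \<Rightarrow> real" where
  "coh_info_state \<Phi> \<Psi> \<rho> = entropy (\<Psi> \<rho>) - entropy (\<Phi> \<rho>)"

(* I_C(Psi) = max over density operators on C^a (the max exists; Sup = max) *)
definition coh_info :: "nat \<Rightarrow> (complex mat \<Rightarrow> complex mat) \<Rightarrow> (complex mat \<Rightarrow> complex mat) \<Rightarrow> real" where
  "coh_info a \<Phi> \<Psi> = Sup (coh_info_state \<Phi> \<Psi> ` {\<rho>. density a \<rho>})"

end

theory Submission
  imports Defs
begin

lemma det1: "(M::'a::comm_ring_1 mat) \<in> carrier_mat 1 1 \<Longrightarrow> det M = M$$(0,0)"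
  by (subst det_upper_triangular[of M 1]) (auto simp: upper_triangular_def diag_mat_def)
lemma det2: assumes "(M::'a::comm_ring_1 mat) \<in> carrier_mat 2 2"
  shows "det M = M$$(0,0)*M$$(1,1) - M$$(0,1)*M$$(1,0)"
proof -
  have "det M = (\<Sum>i<2. M $$ (i,0) * cofactor M i 0)"
    by (rule laplace_expansion_column[OF assms]) auto
  also have "\<dots> = M$$(0,0)*M$$(1,1) - M$$(0,1)*M$$(1,0)"
    using assms by (simp add: numeral_2_eq_2 cofactor_def det1 mat_delete_def lessThan_Suc)
  finally show ?thesis .
qed
lemma char_poly2: assumes "(M::'a::comm_ring_1 mat) \<in> carrier_mat 2 2"
  shows "char_poly M = [: M$$(0,0)*M$$(1,1) - M$$(0,1)*M$$(1,0), -(M$$(0,0)+M$$(1,1)), 1:]"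
  unfolding char_poly_def
  apply (subst det2)
  using assms apply simp
  using assms apply (simp add: char_poly_matrix_def)
  done

lemma sylvester:
  fixes G :: "'a::idom mat"
  assumes G: "G \<in> carrier_mat n m" and H: "H \<in> carrier_mat m n"
  shows "[:0,1:]^m * char_poly (G*H) = [:0,1:]^n * char_poly (H*G)"
proof -
  define C where "C = map_mat (\<lambda>a::'a. [:a:])"
  define X where "X = [:0,1::'a:]"
  have CC: "C A * C B = C (A*B)" if "A \<in> carrier_mat r k" "B \<in> carrier_mat k c" for A B r k c
    by (rule eq_matI) (use that in \<open>auto simp: C_def scalar_prod_def sum_to_poly mult.commute\<close>)
  have cpm: "char_poly_matrix A = X \<cdot>\<^sub>m 1\<^sub>m k - C A" if "A \<in> carrier_mat k k" for A k
    by (rule eq_matI) (use that in \<open>auto simp: C_def X_def char_poly_matrix_def\<close>)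
  have CG: "C G \<in> carrier_mat n m" and CH: "C H \<in> carrier_mat m n" using G H by (auto simp: C_def)
  have CGHc: "C (G*H) \<in> carrier_mat n n" "C (H*G) \<in> carrier_mat m m" using G H by (auto simp: C_def)
  define M where "M = four_block_mat (X \<cdot>\<^sub>m 1\<^sub>m n) (C G) (C H) (1\<^sub>m m)"
  define L1 where "L1 = four_block_mat (1\<^sub>m n) (-(C G)) (0\<^sub>m m n) (1\<^sub>m m)"
  define L2 where "L2 = four_block_mat (1\<^sub>m n) (0\<^sub>m n m) (-(C H)) (X \<cdot>\<^sub>m 1\<^sub>m m)"
  have Mc: "M \<in> carrier_mat (n+m) (n+m)" using CG CH by (simp add: M_def)
  have L1c: "L1 \<in> carrier_mat (n+m) (n+m)" using CG CH by (simp add: L1_def)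
  have L2c: "L2 \<in> carrier_mat (n+m) (n+m)" using CG CH by (simp add: L2_def)
  have "L1 * M = four_block_mat (1\<^sub>m n * (X \<cdot>\<^sub>m 1\<^sub>m n) + (-(C G)) * C H) (1\<^sub>m n * C G + (-(C G)) * 1\<^sub>m m)
     (0\<^sub>m m n * (X \<cdot>\<^sub>m 1\<^sub>m n) + 1\<^sub>m m * C H) (0\<^sub>m m n * C G + 1\<^sub>m m * 1\<^sub>m m)"
    unfolding L1_def M_def by (rule mult_four_block_mat) (use CG CH in auto)
  also have "\<dots> = four_block_mat (char_poly_matrix (G*H)) (0\<^sub>m n m) (C H) (1\<^sub>m m)"
    using CG CH G H by (simp add: cpm[of "G*H" n] CC[OF G H] add_uminus_minus_mat[OF _ CGHc(1)] add_uminus_minus_mat[OF CG CG])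
  finally have 1: "L1 * M = four_block_mat (char_poly_matrix (G*H)) (0\<^sub>m n m) (C H) (1\<^sub>m m)" .
  have "det L1 = 1" unfolding L1_def
    by (subst det_four_block_mat_lower_left_zero[of _ n _ m]) (use CG in auto)
  moreover have "det (L1 * M) = det L1 * det M" by (rule det_mult[OF L1c Mc])
  moreover have "det (L1 * M) = char_poly (G*H)" unfolding 1 char_poly_def
    by (subst det_four_block_mat_upper_right_zero[of _ n _ m]) (use CH G H in auto)
  ultimately have dM: "det M = char_poly (G*H)" by simp
  have "L2 * M = four_block_mat (1\<^sub>m n * (X \<cdot>\<^sub>m 1\<^sub>m n) + 0\<^sub>m n m * C H) (1\<^sub>m n * C G + 0\<^sub>m n m * 1\<^sub>m m)
     ((-(C H)) * (X \<cdot>\<^sub>m 1\<^sub>m n) + (X \<cdot>\<^sub>m 1\<^sub>m m) * C H) ((-(C H)) * C G + (X \<cdot>\<^sub>m 1\<^sub>m m) * 1\<^sub>m m)"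
    unfolding L2_def M_def by (rule mult_four_block_mat) (use CG CH in auto)
  also have "\<dots> = four_block_mat (X \<cdot>\<^sub>m 1\<^sub>m n) (C G) (0\<^sub>m m n) (char_poly_matrix (H*G))"
  proof -
    have a: "C H * (X \<cdot>\<^sub>m 1\<^sub>m n) = X \<cdot>\<^sub>m C H"
      using mult_smult_distrib[OF CH, where k=X and B="1\<^sub>m n" and nc=n] CH by simp
    have b: "X \<cdot>\<^sub>m 1\<^sub>m m * C H = X \<cdot>\<^sub>m C H"
      using mult_smult_assoc_mat[OF _ CH, where k=X and A="1\<^sub>m m" and nr=m] CH by simp
    have c: "- C (H * G) + X \<cdot>\<^sub>m 1\<^sub>m m = X \<cdot>\<^sub>m 1\<^sub>m m - C (H * G)"
      by (rule eq_matI) (use CGHc in auto)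
    have d: "- (X \<cdot>\<^sub>m C H) + X \<cdot>\<^sub>m C H = 0\<^sub>m m n" using CH by simp
    show ?thesis
      using CG CH G H by (simp add: cpm[of "H*G" m] CC[OF H G] a b c d)
  qed
  finally have 2: "L2 * M = four_block_mat (X \<cdot>\<^sub>m 1\<^sub>m n) (C G) (0\<^sub>m m n) (char_poly_matrix (H*G))" .
  have "det L2 = X^m" unfolding L2_def
    by (subst det_four_block_mat_upper_right_zero[of _ n _ m]) (use CH in auto)
  moreover have "det (L2 * M) = det L2 * det M" by (rule det_mult[OF L2c Mc])
  moreover have "det (L2 * M) = X^n * char_poly (H*G)" unfolding 2 char_poly_def
    by (subst det_four_block_mat_lower_left_zero[of _ n _ m]) (use CG G H in auto)
  ultimately show ?thesis using dM by (simp add: X_def)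
qed

lemma sig_carrier: "sigma1 \<in> carrier_mat 2 2" "sigma2 \<in> carrier_mat 2 2" "sigma3 \<in> carrier_mat 2 2"
  by (auto simp: sigma1_def sigma2_def sigma3_def mat_of_rows_list_def)

lemma sum2: "(\<Sum>i<2. f i) = f 0 + f (1::nat)" by (simp add: numeral_2_eq_2)
lemma sum2': "(\<Sum>i=0..<2. f i) = f 0 + f (1::nat)" by (simp add: numeral_2_eq_2)
lemma less2: "(i::nat) < 2 \<longleftrightarrow> i = 0 \<or> i = 1" by auto

lemma pauli_explicit:
  assumes r: "\<rho> \<in> carrier_mat 2 2"
  shows "pauli_channel p0 p1 p2 p3 \<rho> = mat 2 2 (\<lambda>(i,j).
     if i = j then complex_of_real (p0+p3) * \<rho>$$(i,i) + complex_of_real (p1+p2) * \<rho>$$(1-i,1-i)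
     else complex_of_real (p0-p3) * \<rho>$$(i,j) + complex_of_real (p1-p2) * \<rho>$$(j,i))"
  apply (rule eq_matI)
  using r sig_carrier
  apply (auto simp: pauli_channel_def less2 scalar_prod_def sum2')
  apply (auto simp: sigma1_def sigma2_def sigma3_def mat_of_rows_list_def algebra_simps)
  done

definition ci :: "nat \<Rightarrow> nat" where "ci c = c mod 2"
definition ca :: "nat \<Rightarrow> nat" where "ca c = (if c = 1 \<or> c = 2 then 1 else 0)"
definition Gm :: "nat \<Rightarrow> complex mat \<Rightarrow> complex mat" where
  "Gm e A = mat e 4 (\<lambda>(k,c). A $$ (ci c * e + k, ca c))"
definition Rm :: "complex mat \<Rightarrow> complex mat" where
  "Rm \<rho> = mat 4 4 (\<lambda>(c,d). if ci c = ci d then \<rho> $$ (ca c, ca d) else 0)"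

lemma sum4': "(\<Sum>i=0..<4. f i) = f 0 + f 1 + f 2 + f (3::nat)"
  by (simp add: eval_nat_numeral)

lemma psi_G:
  assumes A: "A \<in> carrier_mat (2*e) 2" and r: "\<rho> \<in> carrier_mat 2 2"
  shows "ptrace_B 2 e (A * \<rho> * adj A) = Gm e A * (Rm \<rho> * adj (Gm e A))"
proof (rule eq_matI)
  fix k l assume k: "k < dim_row (Gm e A * (Rm \<rho> * adj (Gm e A)))" and l: "l < dim_col (Gm e A * (Rm \<rho> * adj (Gm e A)))"
  hence k: "k < e" and l: "l < e" by (auto simp: Gm_def adj_def Rm_def)
  have i1: "e + k < 2*e" "e + l < 2*e" "k < 2*e" "l < 2*e" using k l by auto
  show "ptrace_B 2 e (A * \<rho> * adj A) $$ (k, l) = (Gm e A * (Rm \<rho> * adj (Gm e A))) $$ (k, l)"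
    using A r k l i1
    by (simp add: ptrace_B_def Gm_def Rm_def adj_def scalar_prod_def sum2 sum2' sum4' ci_def ca_def algebra_simps)
qed (auto simp: ptrace_B_def Gm_def Rm_def adj_def)

definition Emat :: "nat \<Rightarrow> nat \<Rightarrow> complex mat" where
  "Emat a b = mat 2 2 (\<lambda>(x,y). if x = a \<and> y = b then 1 else 0)"

definition Nm :: "real \<Rightarrow> real \<Rightarrow> real \<Rightarrow> real \<Rightarrow> complex mat" where
  "Nm p0 p1 p2 p3 = mat 4 4 (\<lambda>(c,d). if c < 2 \<and> d < 2 then (if c = d then complex_of_real (p0+p3) else complex_of_real (p0-p3))
      else if 2 \<le> c \<and> 2 \<le> d then (if c = d then complex_of_real (p1+p2) else complex_of_real (p1-p2)) else 0)"

lemma Emat_carrier[simp]: "Emat a b \<in> carrier_mat 2 2" by (simp add: Emat_def)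

lemma sum_cnj: "(\<Sum>k\<in>S. cnj (f k)) = cnj (\<Sum>k\<in>S. f k)" by simp

lemma less4: "(i::nat) < 4 \<longleftrightarrow> i = 0 \<or> i = 1 \<or> i = 2 \<or> i = 3" by auto

lemma GG:
  assumes A: "A \<in> carrier_mat (2*e) 2"
  and ch: "\<forall>\<rho>\<in>carrier_mat 2 2. pauli_channel p0 p1 p2 p3 \<rho> = ptrace_E 2 e (A * \<rho> * adj A)"
  shows "adj (Gm e A) * Gm e A = Nm p0 p1 p2 p3"
proof -
  have key: "(\<Sum>k<e. A $$ (i*e+k, a) * cnj (A $$ (j*e+k, b))) = pauli_channel p0 p1 p2 p3 (Emat a b) $$ (i,j)"
    if "i < 2" "j < 2" "a < 2" "b < 2" for i j a b
  proof -
    have Ec: "Emat a b \<in> carrier_mat 2 2" by (simp add: Emat_def)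
    have "pauli_channel p0 p1 p2 p3 (Emat a b) $$ (i,j) = ptrace_E 2 e (A * Emat a b * adj A) $$ (i,j)"
      using ch Ec by simp
    also have "\<dots> = (\<Sum>k<e. A $$ (i*e+k, a) * cnj (A $$ (j*e+k, b)))"
      unfolding ptrace_E_def using that
    proof (simp, intro sum.cong refl)
      fix x assume "x \<in> {..<e}"
      hence b: "i*e+x < 2*e" "j*e+x < 2*e" using that by (auto simp: less2)
      show "(A * Emat a b * adj A) $$ (i * e + x, j * e + x) = A $$ (i * e + x, a) * cnj (A $$ (j * e + x, b))"
        using A b that using less2[of i] less2[of j] less2[of a] less2[of b] by (auto simp: Emat_def adj_def scalar_prod_def sum2')
    qed
    finally show ?thesis by simp
  qed
  show ?thesis
  proof (rule eq_matI)
    fix c d assume c: "c < dim_row (Nm p0 p1 p2 p3)" and d: "d < dim_col (Nm p0 p1 p2 p3)"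
    hence c: "c < 4" and d: "d < 4" by (auto simp: Nm_def)
    have cc: "ci c < 2" "ca c < 2" "ci d < 2" "ca d < 2" by (auto simp: ci_def ca_def)
    have "(adj (Gm e A) * Gm e A) $$ (c,d) = (\<Sum>k<e. cnj (A $$ (ci c*e+k, ca c)) * A $$ (ci d*e+k, ca d))"
      using c d by (simp add: adj_def Gm_def scalar_prod_def atLeast0LessThan)
    also have "\<dots> = cnj (\<Sum>k<e. A $$ (ci c*e+k, ca c) * cnj (A $$ (ci d*e+k, ca d)))"
      by (simp flip: sum_cnj)
    also have "\<dots> = cnj (pauli_channel p0 p1 p2 p3 (Emat (ca c) (ca d)) $$ (ci c, ci d))"
      using key[OF cc(1) cc(3) cc(2) cc(4)] by simp
    also have "\<dots> = Nm p0 p1 p2 p3 $$ (c,d)"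
      using c d unfolding less4 pauli_explicit[OF Emat_carrier]
      by (elim disjE; simp add: Emat_def Nm_def ci_def ca_def)
    finally show "(adj (Gm e A) * Gm e A) $$ (c,d) = Nm p0 p1 p2 p3 $$ (c,d)" by simp
  qed (auto simp: adj_def Gm_def Nm_def)
qed

definition Fc :: "complex \<Rightarrow> real" where
  "Fc x = (if Re x \<le> 0 then 0 else Re x * ln (Re x))"

lemma entropy_Fc: "entropy \<sigma> = - (\<Sum>x\<in>{x. poly (char_poly \<sigma>) x = 0}. real (order x (char_poly \<sigma>)) * Fc x)"
  unfolding entropy_def Fc_def ..

lemma sum_count_mset:
  assumes "finite S" "set_mset M \<subseteq> S"
  shows "(\<Sum>x\<in>S. real (count M x) * g x) = (\<Sum>x\<in>#M. g x)"
  using assms(2)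
proof (induction M)
  case empty then show ?case by simp
next
  case (add a M)
  have "(\<Sum>x\<in>S. real (count (add_mset a M) x) * g x) = (\<Sum>x\<in>S. real (count M x) * g x + (if x = a then g x else 0))"
    by (intro sum.cong) (auto simp: algebra_simps)
  also have "\<dots> = (\<Sum>x\<in>S. real (count M x) * g x) + g a"
    using add.prems assms(1) by (simp add: sum.distrib)
  finally show ?case using add by simp
qed

lemma roots_sum_prod:
  assumes "p = (\<Prod>a\<leftarrow>as. [:-a, 1:])"
  shows "(\<Sum>x\<in>{x. poly p x = 0}. real (order x p) * g x) = (\<Sum>a\<leftarrow>as. g a)"
proof -
  have p0: "p \<noteq> 0" using assms by (auto simp: prod_list_zero_iff)
  have pr: "proots p = mset as" unfolding assms
  proof (induction as)
    case (Cons a as)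
    have "proots (\<Prod>a\<leftarrow>a#as. [:-a, 1:]) = proots ([:-a,1:] * (\<Prod>a\<leftarrow>as. [:-a, 1:]))" by simp
    also have "\<dots> = proots [:-a,1:] + proots (\<Prod>a\<leftarrow>as. [:-a, 1:])"
      by (rule proots_mult) (auto simp: prod_list_zero_iff)
    finally show ?case using Cons by (simp del: prod_list.Cons)
  qed simp
  have "(\<Sum>x\<in>{x. poly p x = 0}. real (order x p) * g x) = (\<Sum>x\<in>{x. poly p x = 0}. real (count (proots p) x) * g x)"
    using p0 by simp
  also have "\<dots> = (\<Sum>x\<in>#proots p. g x)"
    by (rule sum_count_mset) (use p0 poly_roots_finite in auto)
  also have "\<dots> = (\<Sum>a\<leftarrow>as. g a)" unfolding pr by (induction as) auto
  finally show ?thesis .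
qed

lemma entropy_prod:
  assumes "char_poly \<sigma> = (\<Prod>a\<leftarrow>as. [:-a, 1:])"
  shows "entropy \<sigma> = - (\<Sum>a\<leftarrow>as. Fc a)"
  unfolding entropy_Fc roots_sum_prod[OF assms] ..

lemma char_poly_nz: "A \<in> carrier_mat n n \<Longrightarrow> char_poly A \<noteq> 0"
  using degree_monic_char_poly[of A n] by auto

lemma Fc0: "Fc 0 = 0" by (simp add: Fc_def)

lemma sum_nz:
  assumes "p \<noteq> 0"
  shows "(\<Sum>x\<in>{x. poly p x = 0}. real (order x p) * Fc x) = (\<Sum>x\<in>{x. poly p x = 0 \<and> x \<noteq> 0}. real (order x p) * Fc x)"
  by (rule sum.mono_neutral_right) (use assms poly_roots_finite in \<open>auto simp: Fc0\<close>)

lemma sum_Xpow: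
  assumes "p \<noteq> 0"
  shows "(\<Sum>x\<in>{x. poly ([:0,1:]^k * p) x = 0 \<and> x \<noteq> 0}. real (order x ([:0,1:]^k * p)) * Fc x)
     = (\<Sum>x\<in>{x. poly p x = 0 \<and> x \<noteq> 0}. real (order x p) * Fc x)"
proof -
  have S: "{x. poly ([:0,1:]^k * p) x = 0 \<and> x \<noteq> 0} = {x. poly p x = 0 \<and> x \<noteq> 0}" by auto
  show ?thesis unfolding S
  proof (intro sum.cong refl)
    fix x :: complex assume "x \<in> {x. poly p x = 0 \<and> x \<noteq> 0}"
    hence x: "x \<noteq> 0" by auto
    have "order x ([:0,1:]^k * p) = order x ([:0,1:]^k) + order x p"
      by (rule order_mult) (use assms in auto)
    also have "order x ([:0,1:]^k) = 0" by (rule order_0I) (use x in auto)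
    finally show "real (order x ([:0,1:]^k * p)) * Fc x = real (order x p) * Fc x" by simp
  qed
qed

lemma entropy_swap:
  fixes G :: "complex mat"
  assumes G: "G \<in> carrier_mat n m" and H: "H \<in> carrier_mat m n"
  shows "entropy (G*H) = entropy (H*G)"
proof -
  have n1: "char_poly (G*H) \<noteq> 0" by (rule char_poly_nz[of _ n]) (use G H in auto)
  have n2: "char_poly (H*G) \<noteq> 0" by (rule char_poly_nz[of _ m]) (use G H in auto)
  have eq: "[:0,1:]^m * char_poly (G*H) = [:0,1:]^n * char_poly (H*G)" by (rule sylvester[OF G H])
  have "(\<Sum>x\<in>{x. poly (char_poly (G*H)) x = 0}. real (order x (char_poly (G*H))) * Fc x)
      = (\<Sum>x\<in>{x. poly ([:0,1:]^m * char_poly (G*H)) x = 0 \<and> x \<noteq> 0}. real (order x ([:0,1:]^m * char_poly (G*H))) * Fc x)"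
    by (simp only: sum_nz[OF n1] sum_Xpow[OF n1])
  also have "\<dots> = (\<Sum>x\<in>{x. poly (char_poly (H*G)) x = 0}. real (order x (char_poly (H*G))) * Fc x)"
    unfolding eq by (simp only: sum_nz[OF n2] sum_Xpow[OF n2])
  finally show ?thesis unfolding entropy_Fc by simp
qed

definition fr :: "real \<Rightarrow> real" where "fr r = (if r \<le> 0 then 0 else r * ln r)"

lemma fr_tangent:
  assumes x: "x > 0" and y: "y \<ge> 0"
  shows "fr x + (ln x + 1) * (y - x) \<le> fr y"
proof (cases "y = 0")
  case True thus ?thesis using x by (simp add: fr_def algebra_simps)
next
  case False
  hence y: "y > 0" using y by simp
  have "ln (x/y) \<le> x/y - 1" using ln_le_minus_one[of "x/y"] x y by simp
  hence "y * ln (x/y) \<le> y * (x/y - 1)" using y by (simp add: mult_left_mono)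
  moreover have "y * (x/y - 1) = x - y" using y by (simp add: field_simps)
  moreover have "ln (x/y) = ln x - ln y" using x y by (simp add: ln_div)
  ultimately have "y * (ln x - ln y) \<le> x - y" by simp
  thus ?thesis using x y by (simp add: fr_def algebra_simps)
qed

lemma fr_gain:
  assumes a: "a > 0" and b: "b \<ge> 0"
  shows "fr a + fr b + a * ln ((a+b)/a) \<le> fr (a+b)"
proof -
  have "fr b \<le> b * ln (a+b)"
  proof (cases "b = 0")
    case False
    hence "b > 0" using b by simp
    thus ?thesis using a by (simp add: fr_def mult_left_mono)
  qed (simp add: fr_def)
  moreover have "fr (a+b) = a * ln (a+b) + b * ln (a+b)" using a b by (simp add: fr_def algebra_simps)
  moreover have "fr a + a * ln ((a+b)/a) = a * ln (a+b)" using a b by (simp add: fr_def ln_div algebra_simps)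
  ultimately show ?thesis by linarith
qed

lemma analytic:
  assumes u: "u > 0" and v: "v > 0" and uv: "u + v = 1" and P: "P > 0" "4*P \<le> u^2"
    and Q: "Q \<ge> 0" "4*Q \<le> v^2"
  shows "\<exists>\<alpha> \<beta> r1 r2 r3 r4. \<alpha> \<ge> 0 \<and> \<beta> \<ge> 0 \<and> \<alpha> + \<beta> = 1 \<and> r1 + r2 = u \<and> r1*r2 = 4*\<alpha>*\<beta>*P
     \<and> r3 + r4 = v \<and> r3*r4 = 4*\<alpha>*\<beta>*Q
     \<and> fr r1 + fr r2 + fr r3 + fr r4 < fr (u*\<alpha> + v*\<beta>) + fr (u*\<beta> + v*\<alpha>)"
proof -
  define L where "L = \<bar>ln u - ln v\<bar>"
  define T where "T = u^2/(2*P)"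
  define K where "K = u*L/(2*P)"
  define s where "s = min 1 (T/2 * exp(-K))"
  have T0: "T > 0" using u P by (simp add: T_def)
  have s0: "0 < s" using T0 by (simp add: s_def)
  have s1: "s \<le> 1" by (simp add: s_def)
  have sT: "s \<le> T/2 * exp(-K)" by (simp add: s_def)
  define c where "c = sqrt(1-s)"
  have c0: "0 \<le> c" and c1: "c \<le> 1" and c2: "c^2 = 1 - s" using s0 s1 by (auto simp: c_def)
  have cs: "1 - s \<le> c"
  proof -
    have "c^2 \<le> c" using c0 c1 by (simp add: power2_eq_square mult_left_le_one_le)
    thus ?thesis using c2 by simp
  qed
  define \<alpha> where "\<alpha> = (1+c)/2"
  define \<beta> where "\<beta> = (1-c)/2"
  have a0: "\<alpha> \<ge> 0" and b0: "\<beta> \<ge> 0" and ab: "\<alpha> + \<beta> = 1" using c0 c1 by (auto simp: \<alpha>_def \<beta>_def field_simps)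
  have s4: "4*\<alpha>*\<beta> = s"
  proof -
    have "4*\<alpha>*\<beta> = 1 - c^2" by (simp add: \<alpha>_def \<beta>_def power2_eq_square field_simps)
    thus ?thesis using c2 by simp
  qed
  have bs: "\<beta> \<le> s/2" using cs by (simp add: \<beta>_def)
  have Dp: "u^2 - 4*s*P \<ge> 0"
  proof -
    have "s*P \<le> 1*P" using s1 P by (intro mult_right_mono) auto
    moreover have "4*s*P = 4*(s*P)" by simp
    ultimately show ?thesis using P by linarith
  qed
  define D where "D = sqrt (u^2 - 4*s*P)"
  have D0: "D \<ge> 0" and D2: "D^2 = u^2 - 4*s*P" using Dp by (auto simp: D_def)
  have Du: "D < u"
  proof -
    have "D^2 < u^2" using D2 s0 P by simp
    thus ?thesis using D0 u by (simp add: power_less_imp_less_base)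
  qed
  have Ep: "v^2 - 4*s*Q \<ge> 0"
  proof -
    have "s*Q \<le> 1*Q" using s1 Q by (intro mult_right_mono) auto
    moreover have "4*s*Q = 4*(s*Q)" by simp
    ultimately show ?thesis using Q by linarith
  qed
  define E where "E = sqrt (v^2 - 4*s*Q)"
  have E0: "E \<ge> 0" and E2: "E^2 = v^2 - 4*s*Q" using Ep by (auto simp: E_def)
  have Ev: "E \<le> v"
  proof -
    have "E^2 \<le> v^2" using E2 s0 Q by simp
    thus ?thesis using E0 v by (simp add: power2_le_iff_abs_le)
  qed
  define r1 where "r1 = (u+D)/2"
  define r2 where "r2 = (u-D)/2"
  define r3 where "r3 = (v+E)/2"
  define r4 where "r4 = (v-E)/2"
  have r12: "r1 + r2 = u" by (simp add: r1_def r2_def field_simps)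
  have r12m: "r1 * r2 = s*P"
  proof -
    have "r1 * r2 = (u^2 - D^2)/4" by (simp add: r1_def r2_def power2_eq_square algebra_simps)
    thus ?thesis using D2 by simp
  qed
  have r34: "r3 + r4 = v" by (simp add: r3_def r4_def field_simps)
  have r34m: "r3 * r4 = s*Q"
  proof -
    have "r3 * r4 = (v^2 - E^2)/4" by (simp add: r3_def r4_def power2_eq_square algebra_simps)
    thus ?thesis using E2 by simp
  qed
  have r2p: "r2 > 0" using Du by (simp add: r2_def)
  have r1p: "r1 > 0" using D0 u by (simp add: r1_def)
  have r1u: "r1 \<le> u" "u/2 \<le> r1" using Du D0 by (auto simp: r1_def)
  have r3p: "r3 > 0" using E0 v by (simp add: r3_def)
  have r4p: "r4 \<ge> 0" using Ev by (simp add: r4_def)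
  have st1: "fr r2 + fr r1 + r2 * ln (u/r2) \<le> fr u"
    using fr_gain[OF r2p, of r1] r1p r12 by (simp add: add.commute)
  have st2: "fr r3 + fr r4 \<le> fr v"
  proof -
    have "fr r3 + fr r4 + r3 * ln ((r3+r4)/r3) \<le> fr (r3+r4)" by (rule fr_gain[OF r3p r4p])
    moreover have "r3 * ln ((r3+r4)/r3) \<ge> 0" using r3p r4p by (intro mult_nonneg_nonneg) auto
    ultimately show ?thesis using r34 by simp
  qed
  have st3: "fr (u*\<alpha> + v*\<beta>) + fr (u*\<beta> + v*\<alpha>) \<ge> fr u + fr v - L * s / 2"
  proof -
    have p1: "u*\<alpha> + v*\<beta> \<ge> 0" "u*\<beta> + v*\<alpha> \<ge> 0" using u v a0 b0 by auto
    have t1: "fr u + (ln u + 1) * ((u*\<alpha> + v*\<beta>) - u) \<le> fr (u*\<alpha> + v*\<beta>)" by (rule fr_tangent[OF u p1(1)])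
    have t2: "fr v + (ln v + 1) * ((u*\<beta> + v*\<alpha>) - v) \<le> fr (u*\<beta> + v*\<alpha>)" by (rule fr_tangent[OF v p1(2)])
    have d1: "(u*\<alpha> + v*\<beta>) - u = (v-u)*\<beta>"
    proof - have "(u*\<alpha> + v*\<beta>) - u = u*(\<alpha>+\<beta>-1) + (v-u)*\<beta>" by (simp add: algebra_simps)
      thus ?thesis using ab by simp qed
    have d2: "(u*\<beta> + v*\<alpha>) - v = (u-v)*\<beta>"
    proof - have "(u*\<beta> + v*\<alpha>) - v = v*(\<alpha>+\<beta>-1) + (u-v)*\<beta>" by (simp add: algebra_simps)
      thus ?thesis using ab by simp qed
    have "(ln u + 1) * ((v-u)*\<beta>) + (ln v + 1) * ((u-v)*\<beta>) = (ln u - ln v) * (v - u) * \<beta>"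
      by (simp add: algebra_simps)
    also have "\<dots> \<ge> - (L * \<beta>)"
    proof -
      have "\<bar>(ln u - ln v) * (v - u)\<bar> \<le> L * 1"
        unfolding abs_mult L_def using u v uv by (intro mult_left_mono) auto
      hence "\<bar>(ln u - ln v) * (v - u) * \<beta>\<bar> \<le> L * \<beta>" using b0 by (simp add: abs_mult mult_right_mono)
      thus ?thesis by linarith
    qed
    finally have "(ln u + 1) * ((v-u)*\<beta>) + (ln v + 1) * ((u-v)*\<beta>) \<ge> - (L * \<beta>)" .
    moreover have "L * \<beta> \<le> L * (s/2)" using bs by (intro mult_left_mono) (auto simp: L_def)
    ultimately show ?thesis using t1 t2 d1 d2 by simp
  qed
  have st4: "r2 * ln (u/r2) \<ge> (s*P/u) * ln (T/s)"
  proof -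
    have r2eq: "r2 = s*P/r1" using r12m r1p by (simp add: field_simps)
    have lo: "r2 \<ge> s*P/u" unfolding r2eq using r1u r1p s0 P by (intro divide_left_mono) auto
    have hi: "r2 \<le> 2*s*P/u"
    proof -
      have "s*P/r1 \<le> s*P/(u/2)" using r1u u s0 P by (intro divide_left_mono) auto
      thus ?thesis unfolding r2eq by (simp add: mult.commute mult.left_commute)
    qed
    have r2u: "r2 \<le> u" using r12 r1p by simp
    have "T/s \<le> u/r2"
    proof -
      have "T/s = u/(2*s*P/u)" using u s0 P by (simp add: T_def field_simps power2_eq_square)
      also have "\<dots> \<le> u/r2" using hi r2p u s0 P by (intro divide_left_mono) auto
      finally show ?thesis .
    qed
    hence l1: "ln (T/s) \<le> ln (u/r2)" using T0 s0 by (intro ln_mono) auto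
    have l0: "ln (u/r2) \<ge> 0" using r2u r2p by simp
    have "(s*P/u) * ln (T/s) \<le> (s*P/u) * ln (u/r2)" using l1 s0 P u by (intro mult_left_mono) auto
    also have "\<dots> \<le> r2 * ln (u/r2)" using lo l0 by (intro mult_right_mono)
    finally show ?thesis .
  qed
  have st5: "(s*P/u) * ln (T/s) > L * s / 2"
  proof -
    have "s * (2 * exp K) \<le> T"
    proof -
      have "s * (2 * exp K) \<le> (T/2 * exp(-K)) * (2 * exp K)" using sT by (intro mult_right_mono) auto
      also have "\<dots> = T" by (simp add: exp_minus field_simps)
      finally show ?thesis .
    qed
    hence "2 * exp K \<le> T/s" using s0 by (simp add: field_simps)
    hence "ln (2 * exp K) \<le> ln (T/s)" by (intro ln_mono) auto
    hence "ln 2 + K \<le> ln (T/s)" by (simp add: ln_mult)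
    hence "K < ln (T/s)" using ln_gt_zero[of "2::real"] by linarith
    hence "(s*P/u) * K < (s*P/u) * ln (T/s)" using s0 P u by (intro mult_strict_left_mono) auto
    moreover have "(s*P/u) * K = L * s / 2" using P u by (simp add: K_def field_simps)
    ultimately show ?thesis by linarith
  qed
  have "fr r1 + fr r2 + fr r3 + fr r4 < fr (u*\<alpha> + v*\<beta>) + fr (u*\<beta> + v*\<alpha>)"
    using st1 st2 st3 st4 st5 by linarith
  moreover have "r1*r2 = 4*\<alpha>*\<beta>*P" "r3*r4 = 4*\<alpha>*\<beta>*Q" using r12m r34m s4 by auto
  ultimately show ?thesis using a0 b0 ab r12 r34 by blast
qed

lemma char_poly_blockdiag:
  fixes A1 :: "'a::idom mat"
  assumes A1: "A1 \<in> carrier_mat n n" and A3: "A3 \<in> carrier_mat m m"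
  shows "char_poly (four_block_mat A1 (0\<^sub>m n m) (0\<^sub>m m n) A3) = char_poly A1 * char_poly A3"
proof -
  let ?cm = "\<lambda> A. [:0, 1:] \<cdot>\<^sub>m 1\<^sub>m (dim_row A) + map_mat (\<lambda>a. [:- a:]) A"
  have "char_poly (four_block_mat A1 (0\<^sub>m n m) (0\<^sub>m m n) A3) = det (?cm (four_block_mat A1 (0\<^sub>m n m) (0\<^sub>m m n) A3))"
    unfolding char_poly_defs using A1 A3 by simp
  also have "?cm (four_block_mat A1 (0\<^sub>m n m) (0\<^sub>m m n) A3) = four_block_mat (?cm A1) (0\<^sub>m n m) (0\<^sub>m m n) (?cm A3)"
    by (rule eq_matI) (use A1 A3 in \<open>auto simp: one_poly_def\<close>)
  also have "det \<dots> = det (?cm A1) * det (?cm A3)"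
    by (rule det_four_block_mat_lower_left_zero) (use A1 A3 in auto)
  also have "\<dots> = char_poly A1 * char_poly A3" unfolding char_poly_defs ..
  finally show ?thesis .
qed

lemma quad_factor: "[:r1*r2, -(r1+r2), 1:] = [:-r1,1:] * [:-(r2::'a::comm_ring_1),1:]"
  by (simp add: algebra_simps)

lemma Fc_real[simp]: "Fc (complex_of_real r) = fr r" by (simp add: Fc_def fr_def)

definition rhod :: "real \<Rightarrow> real \<Rightarrow> complex mat" where
  "rhod a b = mat 2 2 (\<lambda>(i,j). if i = j then (if i = 0 then complex_of_real a else complex_of_real b) else 0)"

lemma rhod_carrier[simp]: "rhod a b \<in> carrier_mat 2 2" by (simp add: rhod_def)

definition Bm :: "real \<Rightarrow> real \<Rightarrow> real \<Rightarrow> real \<Rightarrow> complex mat" where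
  "Bm a b x y = mat 2 2 (\<lambda>(i,j). complex_of_real ((if i = 0 then a else b) * (if i = j then x + y else x - y)))"

lemma RN:
  "Rm (rhod a b) * Nm p0 p1 p2 p3 = four_block_mat (Bm a b p0 p3) (0\<^sub>m 2 2) (0\<^sub>m 2 2) (Bm b a p1 p2)"
proof (rule eq_matI)
  fix i j assume "i < dim_row (four_block_mat (Bm a b p0 p3) (0\<^sub>m 2 2) (0\<^sub>m 2 2) (Bm b a p1 p2))"
    "j < dim_col (four_block_mat (Bm a b p0 p3) (0\<^sub>m 2 2) (0\<^sub>m 2 2) (Bm b a p1 p2))"
  hence "i < 4" "j < 4" by (auto simp: Bm_def)
  thus "(Rm (rhod a b) * Nm p0 p1 p2 p3) $$ (i, j) = four_block_mat (Bm a b p0 p3) (0\<^sub>m 2 2) (0\<^sub>m 2 2) (Bm b a p1 p2) $$ (i, j)"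
    unfolding less4
    by (elim disjE; simp add: Rm_def Nm_def rhod_def Bm_def scalar_prod_def sum4' ci_def ca_def)
qed (auto simp: Rm_def Nm_def Bm_def)

lemma char_poly_Bm:
  "char_poly (Bm a b x y) = [: complex_of_real (a*b*((x+y)^2 - (x-y)^2)), - complex_of_real ((a+b)*(x+y)), 1:]"
  by (subst char_poly2) (auto simp: Bm_def power2_eq_square algebra_simps)

lemma ent_psi:
  assumes A: "A \<in> carrier_mat (2*e) 2"
  and ch: "\<forall>\<rho>\<in>carrier_mat 2 2. pauli_channel p0 p1 p2 p3 \<rho> = ptrace_E 2 e (A * \<rho> * adj A)"
  and r12: "r1 + r2 = (a+b)*(p0+p3)" "r1 * r2 = 4*a*b*p0*p3"
  and r34: "r3 + r4 = (a+b)*(p1+p2)" "r3 * r4 = 4*a*b*p1*p2"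
  shows "entropy (ptrace_B 2 e (A * rhod a b * adj A)) = - (fr r1 + fr r2 + fr r3 + fr r4)"
proof -
  let ?G = "Gm e A" and ?R = "Rm (rhod a b)"
  have Gc: "?G \<in> carrier_mat e 4" by (simp add: Gm_def)
  have Rc: "?R \<in> carrier_mat 4 4" by (simp add: Rm_def)
  have aGc: "adj ?G \<in> carrier_mat 4 e" by (simp add: Gm_def adj_def)
  have H: "?R * adj ?G \<in> carrier_mat 4 e" using Rc aGc by simp
  have "entropy (ptrace_B 2 e (A * rhod a b * adj A)) = entropy (?G * (?R * adj ?G))"
    by (simp add: psi_G[OF A])
  also have "\<dots> = entropy ((?R * adj ?G) * ?G)" by (rule entropy_swap[OF Gc H])
  also have "(?R * adj ?G) * ?G = ?R * (adj ?G * ?G)" by (rule assoc_mult_mat[OF Rc aGc Gc])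
  also have "\<dots> = ?R * Nm p0 p1 p2 p3" by (simp add: GG[OF A ch])
  also have "\<dots> = four_block_mat (Bm a b p0 p3) (0\<^sub>m 2 2) (0\<^sub>m 2 2) (Bm b a p1 p2)" by (rule RN)
  also have "entropy \<dots> = - (fr r1 + fr r2 + fr r3 + fr r4)"
  proof -
    have "char_poly (four_block_mat (Bm a b p0 p3) (0\<^sub>m 2 2) (0\<^sub>m 2 2) (Bm b a p1 p2))
       = (\<Prod>x\<leftarrow>[complex_of_real r1, complex_of_real r2, complex_of_real r3, complex_of_real r4]. [:-x, 1:])"
    proof -
      have e1: "char_poly (Bm a b p0 p3) = [:-complex_of_real r1,1:] * [:-complex_of_real r2,1:]"
        unfolding char_poly_Bm quad_factor[symmetric] using r12
        by (simp add: power2_eq_square algebra_simps flip: of_real_mult of_real_add)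
      have e2: "char_poly (Bm b a p1 p2) = [:-complex_of_real r3,1:] * [:-complex_of_real r4,1:]"
        unfolding char_poly_Bm quad_factor[symmetric] using r34
        by (simp add: power2_eq_square algebra_simps flip: of_real_mult of_real_add)
      have "char_poly (four_block_mat (Bm a b p0 p3) (0\<^sub>m 2 2) (0\<^sub>m 2 2) (Bm b a p1 p2)) = char_poly (Bm a b p0 p3) * char_poly (Bm b a p1 p2)"
        by (rule char_poly_blockdiag) (auto simp: Bm_def)
      then show ?thesis unfolding e1 e2 by (simp only: list.map prod_list.Cons prod_list.Nil mult_1_right mult.assoc)
    qed
    note cp = this
    show ?thesis by (simp add: entropy_prod[OF cp])
  qed
  finally show ?thesis .
qed

lemma ent_phi:
  "entropy (pauli_channel p0 p1 p2 p3 (rhod a b)) = - (fr ((p0+p3)*a + (p1+p2)*b) + fr ((p0+p3)*b + (p1+p2)*a))"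
proof -
  let ?x = "(p0+p3)*a + (p1+p2)*b" and ?y = "(p0+p3)*b + (p1+p2)*a"
  have c: "pauli_channel p0 p1 p2 p3 (rhod a b) \<in> carrier_mat 2 2" by (simp add: pauli_explicit)
  have "char_poly (pauli_channel p0 p1 p2 p3 (rhod a b)) = [:complex_of_real (?x*?y), - complex_of_real (?x+?y), 1:]"
    by (subst char_poly2[OF c]) (simp add: pauli_explicit rhod_def)
  also have "\<dots> = [:complex_of_real ?x * complex_of_real ?y, - (complex_of_real ?x + complex_of_real ?y), 1:]"
    by simp
  also have "\<dots> = (\<Prod>z\<leftarrow>[complex_of_real ?x, complex_of_real ?y]. [:-z, 1:])"
    by (simp only: quad_factor) simp
  finally have cp: "char_poly (pauli_channel p0 p1 p2 p3 (rhod a b)) = (\<Prod>z\<leftarrow>[complex_of_real ?x, complex_of_real ?y]. [:-z, 1:])" .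
  show ?thesis unfolding entropy_prod[OF cp] by (simp only: list.map sum_list.Cons sum_list.Nil Fc_real)
qed

lemma density2:
  assumes "density 2 \<rho>"
  shows "\<rho> \<in> carrier_mat 2 2" "cmod (\<rho>$$(0,0)) \<le> 1" "cmod (\<rho>$$(1,1)) \<le> 1"
    "cmod (\<rho>$$(0,1)) \<le> 1" "cmod (\<rho>$$(1,0)) \<le> 1" "\<rho>$$(0,0) + \<rho>$$(1,1) = 1"
proof -
  have c: "\<rho> \<in> carrier_mat 2 2" and h: "adj \<rho> = \<rho>"
    and psd: "\<And>v. 0 \<le> Re (\<Sum>i<2. \<Sum>j<2. cnj (v i) * \<rho> $$ (i,j) * v j)"
    and t: "tr \<rho> = 1" using assms unfolding density_def by auto
  show "\<rho> \<in> carrier_mat 2 2" by (rule c)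
  have hij: "cnj (\<rho>$$(j,i)) = \<rho>$$(i,j)" if "i < 2" "j < 2" for i j
  proof -
    have "adj \<rho> $$ (i,j) = \<rho> $$ (i,j)" using h by simp
    thus ?thesis using c that by (simp add: adj_def)
  qed
  have t1: "\<rho>$$(0,0) + \<rho>$$(1,1) = 1" using t c by (simp add: tr_def sum2)
  thus "\<rho>$$(0,0) + \<rho>$$(1,1) = 1" .
  have i0: "Im (\<rho>$$(0,0)) = 0" using arg_cong[OF hij[of 0 0], of Im] by simp
  have i1: "Im (\<rho>$$(1,1)) = 0" using arg_cong[OF hij[of 1 1], of Im] by simp
  have r0: "Re (\<rho>$$(0,0)) \<ge> 0" using psd[of "\<lambda>i. if i = 0 then 1 else 0"] by (simp add: sum2)
  have r1: "Re (\<rho>$$(1,1)) \<ge> 0" using psd[of "\<lambda>i. if i = 1 then 1 else 0"] by (simp add: sum2)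
  have rs: "Re (\<rho>$$(0,0)) + Re (\<rho>$$(1,1)) = 1" using arg_cong[OF t1, of Re] by simp
  have e0: "\<rho>$$(0,0) = complex_of_real (Re (\<rho>$$(0,0)))" using i0 by (simp add: complex_eq_iff)
  have e1: "\<rho>$$(1,1) = complex_of_real (Re (\<rho>$$(1,1)))" using i1 by (simp add: complex_eq_iff)
  show m0: "cmod (\<rho>$$(0,0)) \<le> 1" using r0 r1 rs by (subst e0) simp
  show m1: "cmod (\<rho>$$(1,1)) \<le> 1" using r0 r1 rs by (subst e1) simp
  define b where "b = \<rho>$$(0,1)"
  have c10: "\<rho>$$(1,0) = cnj b" using arg_cong[OF hij[of 0 1], of cnj] by (simp add: b_def)
  have "0 \<le> Re (\<Sum>i<2. \<Sum>j<2. cnj ((\<lambda>i. if i = 0 then 1 else - cnj b) i) * \<rho> $$ (i,j) * (\<lambda>i. if i = 0 then 1 else - cnj b) j)"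
    by (rule psd)
  also have "\<dots> = Re (\<rho>$$(0,0)) - 2 * (cmod b)^2 + Re (\<rho>$$(1,1)) * (cmod b)^2"
  proof -
    have x1: "\<rho>$$(Suc 0, 0) = cnj b" "\<rho>$$(0, Suc 0) = b" "Im (\<rho>$$(Suc 0, Suc 0)) = 0"
      using c10 i1 by (auto simp: b_def)
    have x2: "cmod b * cmod b = Re b*Re b + Im b * Im b" using cmod_power2[of b] by (simp add: power2_eq_square)
    show ?thesis by (simp add: sum2 x1 power2_eq_square algebra_simps x2)
  qed
  finally have "(cmod b)^2 * (2 - Re (\<rho>$$(1,1))) \<le> Re (\<rho>$$(0,0))" by (simp add: algebra_simps)
  moreover have "(cmod b)^2 * 1 \<le> (cmod b)^2 * (2 - Re (\<rho>$$(1,1)))" using r0 rs by (intro mult_left_mono) auto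
  ultimately have "(cmod b)^2 \<le> 1" using r1 rs by simp
  hence mb: "cmod b \<le> 1" by (simp add: power_le_one_iff abs_le_square_iff)
  show "cmod (\<rho>$$(0,1)) \<le> 1" using mb b_def by simp
  show "cmod (\<rho>$$(1,0)) \<le> 1" using mb c10 by simp
qed

lemma Fc_ge: "Fc x \<ge> -1"
proof (cases "Re x \<le> 0")
  case False
  hence y: "Re x > 0" by simp
  have "ln (1/Re x) \<le> 1/Re x - 1" using ln_le_minus_one[of "1/Re x"] y by simp
  hence "- ln (Re x) \<le> 1/Re x - 1" using y by (simp add: ln_div)
  hence "Re x * (- ln (Re x)) \<le> Re x * (1/Re x - 1)" using y by (intro mult_left_mono) auto
  hence "- (Re x * ln (Re x)) \<le> 1 - Re x" using y by (simp add: algebra_simps)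
  thus ?thesis using y by (simp add: Fc_def)
qed (simp add: Fc_def)

lemma entropy_upper:
  assumes "\<sigma> \<in> carrier_mat n n"
  shows "entropy \<sigma> \<le> real n"
proof -
  let ?p = "char_poly \<sigma>"
  have p0: "?p \<noteq> 0" by (rule char_poly_nz[OF assms])
  have "- (\<Sum>x\<in>{x. poly ?p x = 0}. real (order x ?p) * Fc x) = (\<Sum>x\<in>{x. poly ?p x = 0}. real (order x ?p) * (- Fc x))"
    by (simp add: sum_negf)
  also have "\<dots> \<le> (\<Sum>x\<in>{x. poly ?p x = 0}. real (order x ?p) * 1)"
    using Fc_ge by (intro sum_mono mult_left_mono) (auto simp: add.commute)
  also have "\<dots> = real (\<Sum>x\<in>{x. poly ?p x = 0}. order x ?p)" by simp
  also have "\<dots> \<le> real (degree ?p)" using sum_order_le_degree[OF p0] by linarith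
  also have "degree ?p = n" using degree_monic_char_poly[OF assms] by simp
  finally show ?thesis unfolding entropy_Fc .
qed

lemma root_bound:
  fixes x d :: complex
  assumes "poly [:d, -1, 1:] x = 0" and "cmod d \<le> 2"
  shows "cmod x \<le> 2"
proof (rule ccontr)
  assume "\<not> cmod x \<le> 2"
  hence t: "cmod x > 2" by simp
  have "x * x = x - d" using assms(1) by (simp add: algebra_simps)
  hence "cmod x * cmod x = cmod (x - d)" by (simp add: norm_mult[symmetric])
  also have "\<dots> \<le> cmod x + cmod d" by (rule norm_triangle_ineq4)
  finally have "cmod x * cmod x \<le> cmod x + 2" using assms(2) by linarith
  moreover have "cmod x * cmod x > 2 * cmod x" using t by (intro mult_strict_right_mono) auto
  ultimately show False using t by linarith
qed

lemma Fc_le2: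
  assumes "cmod x \<le> 2"
  shows "Fc x \<le> 2"
proof (cases "Re x \<le> 0")
  case False
  hence y: "Re x > 0" by simp
  have r2: "Re x \<le> 2" using abs_Re_le_cmod[of x] assms by linarith
  have "ln (Re x) \<le> Re x - 1" using ln_le_minus_one y by simp
  hence "Re x * ln (Re x) \<le> Re x * (Re x - 1)" using y by (intro mult_left_mono) auto
  also have "\<dots> \<le> 2 * 1"
  proof -
    have "(Re x - 2)*(Re x + 1) \<le> 0" using r2 y by (intro mult_nonpos_nonneg) auto
    thus ?thesis by (simp add: algebra_simps)
  qed
  finally show ?thesis using y by (simp add: Fc_def)
qed (simp add: Fc_def)

lemma cmod_comb:
  assumes "cmod z \<le> 1" "cmod w \<le> 1"
  shows "cmod (complex_of_real \<alpha> * z + complex_of_real \<beta> * w) \<le> \<bar>\<alpha>\<bar> + \<bar>\<beta>\<bar>"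
proof -
  have "cmod (complex_of_real \<alpha> * z + complex_of_real \<beta> * w) \<le> \<bar>\<alpha>\<bar> * cmod z + \<bar>\<beta>\<bar> * cmod w"
    using norm_triangle_ineq[of "complex_of_real \<alpha> * z" "complex_of_real \<beta> * w"] by (simp add: norm_mult)
  also have "\<dots> \<le> \<bar>\<alpha>\<bar> * 1 + \<bar>\<beta>\<bar> * 1" using assms by (intro add_mono mult_left_mono) auto
  finally show ?thesis by simp
qed

lemma entropy_phi_lower:
  assumes d: "density 2 \<rho>" and p: "p0 \<ge> 0" "p1 \<ge> 0" "p2 \<ge> 0" "p3 \<ge> 0" "p0 + p1 + p2 + p3 = 1"
  shows "entropy (pauli_channel p0 p1 p2 p3 \<rho>) \<ge> -4"
proof -
  note D = density2[OF d]
  let ?M = "pauli_channel p0 p1 p2 p3 \<rho>"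
  have Mc: "?M \<in> carrier_mat 2 2" using D(1) by (simp add: pauli_explicit)
  let ?d = "?M$$(0,0)*?M$$(1,1) - ?M$$(0,1)*?M$$(1,0)"
  have M00: "cmod (?M$$(0,0)) \<le> 1" using D p
    by (simp add: pauli_explicit del: of_real_add of_real_diff) (rule order.trans[OF cmod_comb], auto)
  have M11: "cmod (?M$$(1,1)) \<le> 1" using D p
    by (simp add: pauli_explicit del: of_real_add of_real_diff) (rule order.trans[OF cmod_comb], auto)
  have M01: "cmod (?M$$(0,1)) \<le> 1" using D p
    by (simp add: pauli_explicit del: of_real_add of_real_diff) (rule order.trans[OF cmod_comb], auto)
  have M10: "cmod (?M$$(1,0)) \<le> 1" using D p
    by (simp add: pauli_explicit del: of_real_add of_real_diff) (rule order.trans[OF cmod_comb], auto)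
  have dd: "cmod ?d \<le> 2"
  proof -
    have "cmod ?d \<le> cmod (?M$$(0,0)) * cmod (?M$$(1,1)) + cmod (?M$$(0,1)) * cmod (?M$$(1,0))"
      using norm_triangle_ineq4 by (metis norm_mult)
    also have "\<dots> \<le> 1 * 1 + 1 * 1" using M00 M11 M01 M10 by (intro add_mono mult_mono) auto
    finally show ?thesis by simp
  qed
  have tr1: "?M$$(0,0) + ?M$$(1,1) = 1"
  proof -
    have "?M$$(0,0) + ?M$$(1,1) = complex_of_real (p0+p1+p2+p3) * (\<rho>$$(0,0) + \<rho>$$(1,1))"
      using D(1) by (simp add: pauli_explicit algebra_simps)
    thus ?thesis using D p by simp
  qed
  have cp: "char_poly ?M = [:?d, -1, 1:]" unfolding char_poly2[OF Mc] tr1 ..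
  let ?p = "char_poly ?M"
  have p0: "?p \<noteq> 0" by (rule char_poly_nz[OF Mc])
  have "(\<Sum>x\<in>{x. poly ?p x = 0}. real (order x ?p) * Fc x) \<le> (\<Sum>x\<in>{x. poly ?p x = 0}. real (order x ?p) * 2)"
  proof (intro sum_mono mult_left_mono)
    fix x assume "x \<in> {x. poly ?p x = 0}"
    hence "poly [:?d, -1, 1:] x = 0" using cp by simp
    thus "Fc x \<le> 2" using root_bound dd Fc_le2 by blast
  qed auto
  also have "\<dots> = 2 * real (\<Sum>x\<in>{x. poly ?p x = 0}. order x ?p)" by (simp add: sum_distrib_left mult.commute)
  also have "\<dots> \<le> 2 * real (degree ?p)" using sum_order_le_degree[OF p0]
    by (intro mult_left_mono) (simp only: of_nat_le_iff, simp)
  also have "degree ?p = 2" using degree_monic_char_poly[OF Mc] by simp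
  finally show ?thesis unfolding entropy_Fc by simp
qed

lemma rhod_density:
  assumes "a \<ge> 0" "b \<ge> 0" "a + b = 1"
  shows "density 2 (rhod a b)"
  unfolding density_def
proof (intro conjI allI)
  show "rhod a b \<in> carrier_mat 2 2" by simp
  show "adj (rhod a b) = rhod a b" by (rule eq_matI) (auto simp: adj_def rhod_def)
  show "tr (rhod a b) = 1" using assms by (simp add: tr_def rhod_def sum2 flip: of_real_add)
  fix v :: "nat \<Rightarrow> complex"
  have "Re (\<Sum>i<2. \<Sum>j<2. cnj (v i) * rhod a b $$ (i, j) * v j) = a * (cmod (v 0))^2 + b * (cmod (v 1))^2"
  proof -
    have x: "cmod z * cmod z = Re z*Re z + Im z * Im z" for z using cmod_power2[of z] by (simp add: power2_eq_square)
    show ?thesis by (simp add: sum2 rhod_def algebra_simps power2_eq_square x)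
  qed
  also have "\<dots> \<ge> 0" using assms by simp
  finally show "0 \<le> Re (\<Sum>i<2. \<Sum>j<2. cnj (v i) * rhod a b $$ (i, j) * v j)" .
qed

theorem theorem2:
  fixes p0 p1 p2 p3 :: real and e :: nat and \<Psi> :: "complex mat \<Rightarrow> complex mat"
  assumes "p0 \<ge> 0" "p1 \<ge> 0" "p2 \<ge> 0" "p3 \<ge> 0" "p0 + p1 + p2 + p3 = 1"
    and "length (filter (\<lambda>x. x \<noteq> 0) [p0, p1, p2, p3]) \<ge> 3"
    and "complementary 2 2 e (pauli_channel p0 p1 p2 p3) \<Psi>"
  shows "coh_info 2 (pauli_channel p0 p1 p2 p3) \<Psi> > 0"
proof -
  obtain A where A: "A \<in> carrier_mat (2*e) 2"
    and rel: "\<forall>\<rho> \<in> carrier_mat 2 2. pauli_channel p0 p1 p2 p3 \<rho> = ptrace_E 2 e (A * \<rho> * adj A) \<and>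
                              \<Psi> \<rho> = ptrace_B 2 e (A * \<rho> * adj A)"
    using assms(7) unfolding complementary_def by auto
  have ch: "\<forall>\<rho>\<in>carrier_mat 2 2. pauli_channel p0 p1 p2 p3 \<rho> = ptrace_E 2 e (A * \<rho> * adj A)"
    using rel by auto
  let ?S = "coh_info_state (pauli_channel p0 p1 p2 p3) \<Psi> ` {\<rho>. density 2 \<rho>}"
  have bdd: "bdd_above ?S"
  proof (rule bdd_aboveI[of _ "real e + 4"])
    fix x assume "x \<in> ?S"
    then obtain \<rho> where d: "density 2 \<rho>" and x: "x = coh_info_state (pauli_channel p0 p1 p2 p3) \<Psi> \<rho>" by auto
    have rc: "\<rho> \<in> carrier_mat 2 2" using d by (simp add: density_def)
    have "\<Psi> \<rho> \<in> carrier_mat e e" using rel rc by (simp add: ptrace_B_def)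
    hence "entropy (\<Psi> \<rho>) \<le> real e" by (rule entropy_upper)
    moreover have "entropy (pauli_channel p0 p1 p2 p3 \<rho>) \<ge> -4"
      using entropy_phi_lower[OF d assms(1-5)] .
    ultimately show "x \<le> real e + 4" unfolding x coh_info_state_def by linarith
  qed
  define u where "u = p0 + p3"
  define v where "v = p1 + p2"
  have u0: "u > 0" using assms(1,4,6) unfolding u_def by (cases "p0 = 0"; cases "p3 = 0") (auto split: if_splits)
  have v0: "v > 0" using assms(2,3,6) unfolding v_def by (cases "p1 = 0"; cases "p2 = 0") (auto split: if_splits)
  have uv: "u + v = 1" using assms(5) by (simp add: u_def v_def)
  have PQ: "p0 * p3 > 0 \<or> p1 * p2 > 0"
  proof (rule ccontr)
    assume "\<not> ?thesis"
    hence "(p0 = 0 \<or> p3 = 0) \<and> (p1 = 0 \<or> p2 = 0)" using assms(1-4)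
      by (metis mult_pos_pos order_less_le)
    thus False using assms(6) by (auto split: if_splits)
  qed
  have Pb: "4 * (p0*p3) \<le> u^2" unfolding u_def using sum_squares_ge_zero
  proof -
    have "0 \<le> (p0 - p3)^2" by simp
    thus "4 * (p0*p3) \<le> (p0+p3)^2" by (simp add: power2_eq_square algebra_simps)
  qed
  have Qb: "4 * (p1*p2) \<le> v^2" unfolding v_def
  proof -
    have "0 \<le> (p1 - p2)^2" by simp
    thus "4 * (p1*p2) \<le> (p1+p2)^2" by (simp add: power2_eq_square algebra_simps)
  qed
  have P0: "p0*p3 \<ge> 0" "p1*p2 \<ge> 0" using assms(1-4) by auto
  have "\<exists>\<rho>. density 2 \<rho> \<and> coh_info_state (pauli_channel p0 p1 p2 p3) \<Psi> \<rho> > 0"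
  proof (cases "p0 * p3 > 0")
    case True
    from analytic[OF u0 v0 uv True Pb P0(2) Qb] obtain \<alpha> \<beta> r1 r2 r3 r4 where
      h: "\<alpha> \<ge> 0" "\<beta> \<ge> 0" "\<alpha> + \<beta> = 1" "r1 + r2 = u" "r1*r2 = 4*\<alpha>*\<beta>*(p0*p3)"
      "r3 + r4 = v" "r3*r4 = 4*\<alpha>*\<beta>*(p1*p2)"
      "fr r1 + fr r2 + fr r3 + fr r4 < fr (u*\<alpha> + v*\<beta>) + fr (u*\<beta> + v*\<alpha>)" by blast
    have eps: "entropy (\<Psi> (rhod \<alpha> \<beta>)) = - (fr r1 + fr r2 + fr r3 + fr r4)"
      using rel ent_psi[OF A ch, of r1 r2 \<alpha> \<beta> r3 r4] h by (simp add: u_def v_def algebra_simps)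
    have eph: "entropy (pauli_channel p0 p1 p2 p3 (rhod \<alpha> \<beta>)) = - (fr (u*\<alpha> + v*\<beta>) + fr (u*\<beta> + v*\<alpha>))"
      unfolding ent_phi u_def v_def ..
    show ?thesis
      by (rule exI[of _ "rhod \<alpha> \<beta>"]) (use rhod_density[OF h(1-3)] h(8) eps eph in \<open>simp add: coh_info_state_def\<close>)
  next
    case False
    hence Q: "p1 * p2 > 0" using PQ by auto
    from analytic[OF v0 u0 _ Q Qb P0(1) Pb] uv obtain \<alpha> \<beta> r1 r2 r3 r4 where
      h: "\<alpha> \<ge> 0" "\<beta> \<ge> 0" "\<alpha> + \<beta> = 1" "r1 + r2 = v" "r1*r2 = 4*\<alpha>*\<beta>*(p1*p2)"
      "r3 + r4 = u" "r3*r4 = 4*\<alpha>*\<beta>*(p0*p3)"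
      "fr r1 + fr r2 + fr r3 + fr r4 < fr (v*\<alpha> + u*\<beta>) + fr (v*\<beta> + u*\<alpha>)" by (auto simp: add.commute)
    have eps: "entropy (\<Psi> (rhod \<alpha> \<beta>)) = - (fr r3 + fr r4 + fr r1 + fr r2)"
      using rel ent_psi[OF A ch, of r3 r4 \<alpha> \<beta> r1 r2] h by (simp add: u_def v_def algebra_simps)
    have eph: "entropy (pauli_channel p0 p1 p2 p3 (rhod \<alpha> \<beta>)) = - (fr (u*\<alpha> + v*\<beta>) + fr (u*\<beta> + v*\<alpha>))"
      unfolding ent_phi u_def v_def ..
    have "fr (v*\<alpha> + u*\<beta>) + fr (v*\<beta> + u*\<alpha>) = fr (u*\<alpha> + v*\<beta>) + fr (u*\<beta> + v*\<alpha>)"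
      by (simp add: add.commute)
    thus ?thesis
      by (intro exI[of _ "rhod \<alpha> \<beta>"]) (use rhod_density[OF h(1-3)] h(8) eps eph in \<open>simp add: coh_info_state_def\<close>)
  qed
  then obtain \<rho> where d: "density 2 \<rho>" and pos: "coh_info_state (pauli_channel p0 p1 p2 p3) \<Psi> \<rho> > 0" by blast
  have "coh_info_state (pauli_channel p0 p1 p2 p3) \<Psi> \<rho> \<le> Sup ?S"
    by (rule cSup_upper[OF _ bdd]) (use d in auto)
  thus ?thesis using pos unfolding coh_info_def by linarith
qed

end
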